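(* Let $t\ge 2$ and let $(Q,B)$ be a Steiner system $S(t,k,m)$. Then its incidence matrix is $\lceil k/(t-1)\rceil$-decodable. Moreover, for every integer $n\ge 1$, $$m^*(n,3,3)\le \left\lceil\frac{1+\sqrt{1+24n}}{2}\right\rceil+3.$$
   Context: A Steiner system $S(t,k,m)$ is a pair $(Q,B)$ where $Q$ is a set of $m$ points and $B$ is a collection of $k$-subsets (blocks) of $Q$ such that every $t$-subset of $Q$ is contained in exactly one block. Its incidence matrix is the $|Q|\times|B|$ binary matrix whose $(i,j)$ entry is $1$ iff the $i$-th point lies in the $j$-th block. For a binary matrix $M$ and a nonempty set $S$ of its columns, $S$ is a stopping set if the submatrix formed by $S$ has no row with exactly one $1$; $s(M)$ is the minimum size of a stopping set ($+\infty$ if none). $M$ is $d$-decodable if $s(M)\ge d+1$, and $(d,k)$-decodable if moreover every column has exactly $k$ ones; $m^*(n,d,k)$ is the minimum $m$ such that an $m\times n$ $(d,k)$-decodable matrix exists. *)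

theory Defs
  imports Complex_Main "HOL-Library.Extended_Nat"
begin

text \<open>A binary matrix is given by a predicate M r c (entry is 1 iff M r c holds),
  together with its finite set of row indices R and column indices C.\<close>

definition steiner_system :: "nat \<Rightarrow> nat \<Rightarrow> nat \<Rightarrow> 'a set \<Rightarrow> 'a set set \<Rightarrow> bool" where
  "steiner_system t k m Q B \<longleftrightarrow>
     finite Q \<and> card Q = m \<and>
     (\<forall>b\<in>B. b \<subseteq> Q \<and> card b = k) \<and>
     (\<forall>T. T \<subseteq> Q \<and> card T = t \<longrightarrow> (\<exists>!b. b \<in> B \<and> T \<subseteq> b))"

text \<open>Incidence matrix: rows indexed by points, columns by blocks.\<close>
definition incidence :: "'a \<Rightarrow> 'a set \<Rightarrow> bool" where
  "incidence q b \<longleftrightarrow> q \<in> b"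

definition stopping_set :: "('r \<Rightarrow> 'c \<Rightarrow> bool) \<Rightarrow> 'r set \<Rightarrow> 'c set \<Rightarrow> 'c set \<Rightarrow> bool" where
  "stopping_set M R C S \<longleftrightarrow> S \<subseteq> C \<and> S \<noteq> {} \<and>
     (\<forall>r\<in>R. card {c\<in>S. M r c} \<noteq> 1)"

text \<open>Minimum size of a stopping set; infinity if there is none (Inf {} = \<infinity> in enat).\<close>
definition stopping_number :: "('r \<Rightarrow> 'c \<Rightarrow> bool) \<Rightarrow> 'r set \<Rightarrow> 'c set \<Rightarrow> enat" where
  "stopping_number M R C = Inf ((\<lambda>S. enat (card S)) ` {S. stopping_set M R C S})"

definition decodable :: "nat \<Rightarrow> ('r \<Rightarrow> 'c \<Rightarrow> bool) \<Rightarrow> 'r set \<Rightarrow> 'c set \<Rightarrow> bool" where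
  "decodable d M R C \<longleftrightarrow> stopping_number M R C \<ge> enat (d + 1)"

definition dk_decodable :: "nat \<Rightarrow> nat \<Rightarrow> ('r \<Rightarrow> 'c \<Rightarrow> bool) \<Rightarrow> 'r set \<Rightarrow> 'c set \<Rightarrow> bool" where
  "dk_decodable d k M R C \<longleftrightarrow> decodable d M R C \<and> (\<forall>c\<in>C. card {r\<in>R. M r c} = k)"

definition mstar :: "nat \<Rightarrow> nat \<Rightarrow> nat \<Rightarrow> nat" where
  "mstar n d k = (LEAST m. \<exists>M :: nat \<Rightarrow> nat \<Rightarrow> bool. dk_decodable d k M {0..<m} {0..<n})"

end

theory Submission
  imports Defs
begin

lemma steiner_part:
  fixes t k m :: nat and Q :: "'a set" and B :: "'a set set"
  assumes t2: "t \<ge> 2" and st: "steiner_system t k m Q B"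
  shows "decodable (nat \<lceil>real k / real (t - 1)\<rceil>) incidence Q B"
proof -
  have fQ: "finite Q" and Bs: "\<And>b. b \<in> B \<Longrightarrow> b \<subseteq> Q \<and> card b = k"
    and uniq: "\<And>T. T \<subseteq> Q \<Longrightarrow> card T = t \<Longrightarrow> \<exists>!b. b \<in> B \<and> T \<subseteq> b"
    using st unfolding steiner_system_def by blast+
  have fB: "finite B" using Bs fQ by (meson PowI finite_Pow_iff finite_subset subsetI)
  have inter: "card (b \<inter> b') \<le> t - 1" if "b \<in> B" "b' \<in> B" "b \<noteq> b'" for b b'
  proof (rule ccontr)
    assume "\<not> ?thesis"
    hence "t \<le> card (b \<inter> b')" by simp
    then obtain T where T: "T \<subseteq> b \<inter> b'" "card T = t"
      by (meson obtain_subset_with_card_n)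
    have "T \<subseteq> Q" using T Bs[OF that(1)] by blast
    from uniq[OF this T(2)] T that show False by blast
  qed
  show ?thesis unfolding decodable_def stopping_number_def
  proof (rule Inf_greatest, clarify)
    fix S assume ss: "stopping_set incidence Q B S"
    hence SB: "S \<subseteq> B" and Sne: "S \<noteq> {}" and cnt: "\<And>r. r \<in> Q \<Longrightarrow> card {c\<in>S. incidence r c} \<noteq> 1"
      unfolding stopping_set_def by blast+
    have fS: "finite S" using SB fB finite_subset by blast
    obtain b where b: "b \<in> S" using Sne by blast
    have bQ: "b \<subseteq> Q" and cb: "card b = k" using Bs SB b by blast+
    have cov: "b \<subseteq> (\<Union>b'\<in>S - {b}. b \<inter> b')"
    proof
      fix q assume q: "q \<in> b"
      have "b \<in> {c\<in>S. incidence q c}" using q b by (simp add: incidence_def)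
      moreover have "finite {c\<in>S. incidence q c}" using fS by simp
      moreover have "card {c\<in>S. incidence q c} \<noteq> 1" using cnt bQ q by blast
      ultimately obtain b' where "b' \<in> {c\<in>S. incidence q c}" "b' \<noteq> b"
        by (metis (no_types, lifting) card_1_singletonE card_0_eq empty_iff is_singletonI' is_singleton_altdef)
      thus "q \<in> (\<Union>b'\<in>S - {b}. b \<inter> b')" using q by (auto simp: incidence_def)
    qed
    have "k \<le> card (\<Union>b'\<in>S - {b}. b \<inter> b')"
      using cov cb card_mono fS
      by (metis (no_types, lifting) finite_Diff finite_Int finite_UN_I finite_subset fQ bQ)
    also have "\<dots> \<le> (\<Sum>b'\<in>S - {b}. card (b \<inter> b'))"
      using card_UN_le fS by blast
    also have "\<dots> \<le> card (S - {b}) * (t - 1)"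
      using sum_bounded_above[of "S - {b}" "\<lambda>b'. card (b \<inter> b')" "t - 1"] inter SB b
      by auto
    finally have kle: "k \<le> (card S - 1) * (t - 1)" using fS b by simp
    have t1: "real (t - 1) > 0" using t2 by simp
    have "real k / real (t - 1) \<le> real (card S - 1)"
    proof -
      have "real k \<le> real (card S - 1) * real (t - 1)"
        using kle by (metis of_nat_le_iff of_nat_mult)
      thus ?thesis using t1 by (simp add: pos_divide_le_eq)
    qed
    hence "\<lceil>real k / real (t - 1)\<rceil> \<le> int (card S - 1)"
      by (simp add: ceiling_le_iff)
    moreover have "card S \<ge> 1" using fS b by (metis One_nat_def Suc_leI card_gt_0_iff empty_iff)
    ultimately have "nat \<lceil>real k / real (t - 1)\<rceil> + 1 \<le> card S" by linarith
    thus "enat (nat \<lceil>real k / real (t - 1)\<rceil> + 1) \<le> enat (card S)" by simp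
  qed
qed


definition f0 :: "nat \<Rightarrow> nat \<Rightarrow> nat" where "f0 q j = j mod q"
definition f1 :: "nat \<Rightarrow> nat \<Rightarrow> nat" where "f1 q j = q + j div q mod q"
definition f2 :: "nat \<Rightarrow> nat \<Rightarrow> nat" where "f2 q j = 2 * q + j div q div q"
definition Mx :: "nat \<Rightarrow> nat \<Rightarrow> nat \<Rightarrow> bool" where
  "Mx q r j \<longleftrightarrow> r = f0 q j \<or> r = f1 q j \<or> r = f2 q j"

lemma fiber_const:
  fixes g :: "nat \<Rightarrow> nat"
  assumes fS: "finite S" and c3: "card S \<le> 3"
    and fib: "\<And>j. j \<in> S \<Longrightarrow> card {c\<in>S. g c = g j} \<ge> 2"
    and j: "j \<in> S" and c: "c \<in> S"
  shows "g c = g j"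
proof (rule ccontr)
  assume ne: "g c \<noteq> g j"
  let ?A = "{x\<in>S. g x = g j}" and ?B = "{x\<in>S. g x = g c}"
  have "card ?A + card ?B = card (?A \<union> ?B)"
    by (rule card_Un_disjoint[symmetric]) (use fS ne in auto)
  also have "\<dots> \<le> card S" by (rule card_mono) (use fS in auto)
  finally show False using fib[OF j] fib[OF c] c3 by linarith
qed

lemma f_bounds:
  assumes "q \<ge> 1" "j < q * q * q"
  shows "f0 q j < q" "q \<le> f1 q j" "f1 q j < 2 * q" "2 * q \<le> f2 q j" "f2 q j < 3 * q"
proof -
  show "f0 q j < q" using assms by (simp add: f0_def)
  show "q \<le> f1 q j" by (simp add: f1_def)
  show "f1 q j < 2 * q" using assms by (simp add: f1_def)
  show "2 * q \<le> f2 q j" by (simp add: f2_def)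
  have "j div q div q < q" using assms
    by (simp add: div_mult2_eq[symmetric] less_mult_imp_div_less mult.commute)
  thus "f2 q j < 3 * q" by (simp add: f2_def)
qed

lemma f_inj:
  assumes "f0 q a = f0 q b" "f1 q a = f1 q b" "f2 q a = f2 q b"
  shows "a = b"
proof -
  have m1: "a div q mod q = b div q mod q" using assms(2) by (simp add: f1_def)
  have d1: "a div q div q = b div q div q" using assms(3) by (simp add: f2_def)
  have "a div q = a div q div q * q + a div q mod q" by simp
  also have "\<dots> = b div q div q * q + b div q mod q" using m1 d1 by simp
  also have "\<dots> = b div q" by simp
  finally have dq: "a div q = b div q" .
  have m0: "a mod q = b mod q" using assms(1) by (simp add: f0_def)
  have "a = a div q * q + a mod q" by simp
  also have "\<dots> = b div q * q + b mod q" using dq m0 by simp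
  also have "\<dots> = b" by simp
  finally show ?thesis .
qed

lemma construction:
  assumes q1: "q \<ge> 1" and nq: "n \<le> q * q * q"
  shows "dk_decodable 3 3 (Mx q) {0..<3*q} {0..<n}"
proof -
  have bnd: "\<And>j. j < n \<Longrightarrow> j < q * q * q" using nq by simp
  have row0: "Mx q (f0 q j) c \<longleftrightarrow> f0 q c = f0 q j" if "j < n" "c < n" for j c
    using f_bounds[OF q1 bnd[OF that(1)]] f_bounds[OF q1 bnd[OF that(2)]]
    unfolding Mx_def by auto
  have row1: "Mx q (f1 q j) c \<longleftrightarrow> f1 q c = f1 q j" if "j < n" "c < n" for j c
    using f_bounds[OF q1 bnd[OF that(1)]] f_bounds[OF q1 bnd[OF that(2)]]
    unfolding Mx_def by auto
  have row2: "Mx q (f2 q j) c \<longleftrightarrow> f2 q c = f2 q j" if "j < n" "c < n" for j c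
    using f_bounds[OF q1 bnd[OF that(1)]] f_bounds[OF q1 bnd[OF that(2)]]
    unfolding Mx_def by auto
  have col: "card {r\<in>{0..<3*q}. Mx q r j} = 3" if "j \<in> {0..<n}" for j
  proof -
    have b: "j < q * q * q" using that bnd by simp
    note fb = f_bounds[OF q1 b]
    have "{r\<in>{0..<3*q}. Mx q r j} = {f0 q j, f1 q j, f2 q j}"
      using fb unfolding Mx_def by auto
    thus ?thesis using fb by simp
  qed
  have dec: "stopping_number (Mx q) {0..<3*q} {0..<n} \<ge> enat (3 + 1)"
    unfolding stopping_number_def
  proof (rule Inf_greatest, clarify)
    fix S assume "stopping_set (Mx q) {0..<3*q} {0..<n} S"
    hence Sn: "S \<subseteq> {0..<n}" and Sne: "S \<noteq> {}"
      and cnt: "\<And>r. r \<in> {0..<3*q} \<Longrightarrow> card {c\<in>S. Mx q r c} \<noteq> 1"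
      unfolding stopping_set_def by blast+
    have fS: "finite S" using Sn finite_subset by blast
    have ge2: "card {c\<in>S. g c = g j} \<ge> 2"
      if j: "j \<in> S" and r: "g j < 3 * q" and eq: "\<And>c. c \<in> S \<Longrightarrow> Mx q (g j) c \<longleftrightarrow> g c = g j"
      for g and j
    proof -
      have e: "{c\<in>S. g c = g j} = {c\<in>S. Mx q (g j) c}" using eq by auto
      have "card {c\<in>S. Mx q (g j) c} \<noteq> 1" using cnt r by simp
      moreover have "card {c\<in>S. g c = g j} \<noteq> 0" using fS j by auto
      ultimately show ?thesis using e by (metis One_nat_def Suc_1 less_2_cases_iff not_le)
    qed
    have jn: "\<And>j. j \<in> S \<Longrightarrow> j < n" using Sn by auto
    have g0: "card {c\<in>S. f0 q c = f0 q j} \<ge> 2" if j: "j \<in> S" for j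
    proof -
      note fb = f_bounds[OF q1 bnd[OF jn[OF j]]]
      show ?thesis
        by (rule ge2[OF j]) (use fb row0 jn j in \<open>auto\<close>)
    qed
    have g1: "card {c\<in>S. f1 q c = f1 q j} \<ge> 2" if j: "j \<in> S" for j
    proof -
      note fb = f_bounds[OF q1 bnd[OF jn[OF j]]]
      show ?thesis
        by (rule ge2[OF j]) (use fb row1 jn j in \<open>auto\<close>)
    qed
    have g2: "card {c\<in>S. f2 q c = f2 q j} \<ge> 2" if j: "j \<in> S" for j
    proof -
      note fb = f_bounds[OF q1 bnd[OF jn[OF j]]]
      show ?thesis
        by (rule ge2[OF j]) (use fb row2 jn j in \<open>auto\<close>)
    qed
    show "enat (3 + 1) \<le> enat (card S)"
    proof (rule ccontr)
      assume "\<not> ?thesis"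
      hence c3: "card S \<le> 3" by simp
      obtain j where j: "j \<in> S" using Sne by blast
      have "S = {j}"
      proof (intro equalityI subsetI)
        fix c assume c: "c \<in> S"
        show "c \<in> {j}"
          using f_inj[OF fiber_const[OF fS c3 g0 j c] fiber_const[OF fS c3 g1 j c]
              fiber_const[OF fS c3 g2 j c]] by simp
      qed (use j in auto)
      hence "{c\<in>S. f0 q c = f0 q j} = {j}" by auto
      hence "card {c\<in>S. f0 q c = f0 q j} = 1" by simp
      with g0[OF j] show False by simp
    qed
  qed
  show ?thesis unfolding dk_decodable_def decodable_def using dec col by blast
qed

lemma mstar_part:
  fixes n :: nat assumes n1: "n \<ge> 1"
  shows "int (mstar n 3 3) \<le> \<lceil>(1 + sqrt (1 + 24 * real n)) / 2\<rceil> + 3"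
proof -
  define x where "x = (1 + sqrt (1 + 24 * real n)) / 2"
  have s5: "sqrt (1 + 24 * real n) \<ge> 5"
  proof -
    have "sqrt 25 \<le> sqrt (1 + 24 * real n)" using n1 by (subst real_sqrt_le_iff) simp
    thus ?thesis by simp
  qed
  hence x3: "x \<ge> 3" unfolding x_def by simp
  define c where "c = nat \<lceil>x\<rceil>"
  have cx: "real c \<ge> x" unfolding c_def using x3 by linarith
  have cint: "int c = \<lceil>x\<rceil>" unfolding c_def using x3 by simp
  have c3: "c \<ge> 3" using cx x3 by linarith
  have "2 * real c - 1 \<ge> sqrt (1 + 24 * real n)" using cx unfolding x_def by simp
  hence "(2 * real c - 1)^2 \<ge> (sqrt (1 + 24 * real n))^2"
    by (rule power_mono) simp
  hence "(2 * real c - 1)^2 \<ge> 1 + 24 * real n" by simp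
  hence "real (6 * n) \<le> real (c * c)" using c3 by (simp add: power2_eq_square algebra_simps)
  hence n6: "6 * n \<le> c * c" by linarith
  define q where "q = (c + 3) div 3"
  have q2: "q \<ge> 2" using c3 unfolding q_def by simp
  have cq: "c \<le> 3 * q" unfolding q_def by simp
  have "c * c \<le> (3 * q) * (3 * q)" using cq by (rule mult_le_mono) (rule cq)
  also have "\<dots> = 9 * (q * q)" by simp
  also have "\<dots> \<le> 6 * q * (q * q)" using q2 by (intro mult_le_mono) auto
  finally have nq: "n \<le> q * q * q" using n6 by simp
  have "mstar n 3 3 \<le> 3 * q"
    unfolding mstar_def by (rule Least_le) (use construction[OF _ nq] q2 in auto)
  also have "3 * q \<le> c + 3" unfolding q_def by simp
  finally have "int (mstar n 3 3) \<le> int c + 3" by simp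
  thus ?thesis using cint unfolding x_def by simp
qed

theorem corollary4p5:
  fixes t k m :: nat and Q :: "'a set" and B :: "'a set set"
  assumes "t \<ge> 2"
    and "steiner_system t k m Q B"
  shows "decodable (nat \<lceil>real k / real (t - 1)\<rceil>) incidence Q B
         \<and> (\<forall>n::nat. n \<ge> 1 \<longrightarrow>
              int (mstar n 3 3) \<le> \<lceil>(1 + sqrt (1 + 24 * real n)) / 2\<rceil> + 3)"
  using steiner_part[OF assms] mstar_part by blast

end
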